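(* For every $z_0,z_1\in\ell'$ and every $k\in\mathbb{Z}\setminus\{0\}$: (1) there exists $C=C(k)>0$ such that $\mathcal M(u)\ge C$ for all $u\in\mathcal H^k_{z_0z_1}$; (2) $\mathcal M$ is weakly lower semicontinuous on $\mathcal H^k_{z_0z_1}$ (with respect to the weak topology of $H^1$); (3) $\mathcal M$ is coercive on $\mathcal H^k_{z_0z_1}$.
   Context: Fix $L,h,\beta>0$, $V_\beta(z)=-\frac1{|z|}-\frac{\beta}{|z|^2}$, $\ell=\{y=-L\}$, $\mathcal P=\{y>-L\}$. Winding number: for $u:[a,b]\to\overline{\mathcal P}$ with $u(a),u(b)\in\ell$, $u(s)\in\mathcal P\setminus\{0\}$ on $(a,b)$, $\operatorname{Ind}(u)$ is the winding number around $0$ of the closed curve formed by $u$ followed by the oriented segment from $u(b)$ to $u(a)$. Fix a solution $\hat{\mathcal Z}$ of $\ddot z=-\nabla V_\beta(z)$ at energy $h$ ($\frac12|\dot z|^2+V_\beta(z)=h$) which meets $\ell$ at times $t_0<t_1$ at the points $(\hat x_0,-L)$, $(\hat x_1,-L)$, lies in $\mathcal P$ for $t\in(t_0,t_1)$, has winding number $1$ on $[t_0,t_1]$, and such that the angle between $\dot{\hat{\mathcal Z}}(t_0)$ and $(1,0)$ is $<\pi/2$ and the angle between $(-1,0)$ and $\dot{\hat{\mathcal Z}}(t_1)$ is $>\pi/2$. Let $\ell'\subset\ell$ be the segment with endpoints $(\hat x_0,-L),(\hat x_1,-L)$ and $D$ the compact region bounded by the arc $\hat{\mathcal Z}([t_0,t_1])$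 and $\ell'$. For $z_0,z_1\in\ell'$, $k\ne0$: $\hat{\mathcal H}^k_{z_0z_1}=\{u\in H^1([0,1],D): u(0)=z_0,u(1)=z_1, u(s)\ne0\ \forall s, \operatorname{Ind}(u)=k\}$, $Coll_{z_0z_1}=\{u\in H^1([0,1],D):u(0)=z_0,u(1)=z_1,\exists s: u(s)=0\}$, and $\mathcal H^k_{z_0z_1}=\hat{\mathcal H}^k_{z_0z_1}\sqcup Coll_{z_0z_1}$. The Maupertuis functional is $\mathcal M(u)=\frac12\int_0^1|\dot u(s)|^2ds\int_0^1(h-V_\beta(u(s)))ds\in\mathbb{R}\cup\{\infty\}$. *)

theory Defs
  imports "HOL-Complex_Analysis.Complex_Analysis"
begin

text \<open>The plane is identified with the complex numbers: z = x + i y.\<close>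

definition Vb :: "real \<Rightarrow> complex \<Rightarrow> real" where
  "Vb \<beta> z = - 1 / cmod z - \<beta> / (cmod z)^2"

text \<open>Gradient of Vb (w.r.t. the real coordinates of z):
  grad(-1/|z|) = z/|z|^3, grad(-beta/|z|^2) = 2 beta z/|z|^4.\<close>
definition gradVb :: "real \<Rightarrow> complex \<Rightarrow> complex" where
  "gradVb \<beta> z = z / of_real ((cmod z)^3) + of_real (2 * \<beta>) * z / of_real ((cmod z)^4)"

definition vangle :: "complex \<Rightarrow> complex \<Rightarrow> real" where
  "vangle v w = arccos ((v \<bullet> w) / (norm v * norm w))"

definition Ind :: "(real \<Rightarrow> complex) \<Rightarrow> complex" where
  "Ind u = winding_number (u +++ linepath (u 1) (u 0)) 0"

text \<open>The closed curve: the arc of the orbit on [t0,t1] (rescaled to [0,1]) followed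
  by the segment of the line back to its start; D is the compact region bounded by it.\<close>
definition orbit_loop :: "(real \<Rightarrow> complex) \<Rightarrow> real \<Rightarrow> real \<Rightarrow> real \<Rightarrow> complex" where
  "orbit_loop Z t0 t1 = (\<lambda>s. Z (t0 + s * (t1 - t0))) +++ linepath (Z t1) (Z t0)"

definition regionD :: "(real \<Rightarrow> complex) \<Rightarrow> real \<Rightarrow> real \<Rightarrow> complex set" where
  "regionD Z t0 t1 = path_image (orbit_loop Z t0 t1) \<union> inside (path_image (orbit_loop Z t0 t1))"

text \<open>H^1([0,1],R^2): u is the integral of an L^2 function g (its weak derivative).\<close>
definition weak_deriv :: "(real \<Rightarrow> complex) \<Rightarrow> (real \<Rightarrow> complex) \<Rightarrow> bool" where
  "weak_deriv u g \<longleftrightarrow> g absolutely_integrable_on {0..1} \<and>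
     (\<lambda>s. (norm (g s))^2) integrable_on {0..1} \<and>
     (\<forall>t\<in>{0..1}. u t = u 0 + integral {0..t} g)"

definition H1 :: "(real \<Rightarrow> complex) \<Rightarrow> bool" where
  "H1 u \<longleftrightarrow> (\<exists>g. weak_deriv u g)"

definition h1d :: "(real \<Rightarrow> complex) \<Rightarrow> real \<Rightarrow> complex" where
  "h1d u = (SOME g. weak_deriv u g)"

definition H1_inner :: "(real \<Rightarrow> complex) \<Rightarrow> (real \<Rightarrow> complex) \<Rightarrow> real" where
  "H1_inner u v = integral {0..1} (\<lambda>s. u s \<bullet> v s) + integral {0..1} (\<lambda>s. h1d u s \<bullet> h1d v s)"

definition H1_norm :: "(real \<Rightarrow> complex) \<Rightarrow> real" where
  "H1_norm u = sqrt (H1_inner u u)"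

text \<open>Weak convergence in the Hilbert space H^1 (tested against the inner product
  with every element of H^1, cf. Riesz representation).\<close>
definition weak_conv_H1 :: "(nat \<Rightarrow> real \<Rightarrow> complex) \<Rightarrow> (real \<Rightarrow> complex) \<Rightarrow> bool" where
  "weak_conv_H1 us u \<longleftrightarrow> H1 u \<and> (\<forall>n. H1 (us n)) \<and>
     (\<forall>v. H1 v \<longrightarrow> (\<lambda>n. H1_inner (us n) v) \<longlonglongrightarrow> H1_inner u v)"

definition Hhat :: "complex set \<Rightarrow> complex \<Rightarrow> complex \<Rightarrow> int \<Rightarrow> (real \<Rightarrow> complex) set" where
  "Hhat D z0 z1 k = {u. H1 u \<and> (\<forall>s\<in>{0..1}. u s \<in> D) \<and> u 0 = z0 \<and> u 1 = z1 \<and>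
      (\<forall>s\<in>{0..1}. u s \<noteq> 0) \<and> Ind u = of_int k}"

definition Coll :: "complex set \<Rightarrow> complex \<Rightarrow> complex \<Rightarrow> (real \<Rightarrow> complex) set" where
  "Coll D z0 z1 = {u. H1 u \<and> (\<forall>s\<in>{0..1}. u s \<in> D) \<and> u 0 = z0 \<and> u 1 = z1 \<and>
      (\<exists>s\<in>{0..1}. u s = 0)}"

definition Hk :: "complex set \<Rightarrow> complex \<Rightarrow> complex \<Rightarrow> int \<Rightarrow> (real \<Rightarrow> complex) set" where
  "Hk D z0 z1 k = Hhat D z0 z1 k \<union> Coll D z0 z1"

text \<open>Maupertuis functional, valued in [0,\<infinity>]; h - V is +\<infinity> at the origin.\<close>
definition Mfun :: "real \<Rightarrow> real \<Rightarrow> (real \<Rightarrow> complex) \<Rightarrow> ennreal" where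
  "Mfun h \<beta> u = ennreal (1/2) *
     (\<integral>\<^sup>+ s \<in> {0..1}. ennreal ((norm (h1d u s))^2) \<partial>lborel) *
     (\<integral>\<^sup>+ s \<in> {0..1}. (if u s = 0 then \<infinity> else ennreal (h - Vb \<beta> (u s))) \<partial>lborel)"

end

theory Submission
  imports Defs
begin

lemma borel_sets_lebesgue: "A \<in> sets borel \<Longrightarrow> A \<in> sets lebesgue"
  by (metis sets_completionI_sets sets_lborel)

lemma ae_zero_if_integrals_zero:
  fixes f :: "real \<Rightarrow> real"
  assumes f: "f absolutely_integrable_on {0..1}"
    and z: "\<And>s. s \<in> {0..1} \<Longrightarrow> integral {0..s} f = 0"
  shows "AE x in lborel. x \<in> {0..1} \<longrightarrow> f x = 0"
proof -
  define F where "F x = indicator {0..1} x * f x" for x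
  have intF: "integrable lebesgue F" using f unfolding set_integrable_def F_def by simp
  have fint: "f integrable_on {0..1}" using f by (rule set_lebesgue_integral_eq_integral(1))
  have basic: "(LINT x:{a<..}|lebesgue. F x) = 0" for a
  proof -
    have "(LINT x:{a<..}|lebesgue. F x) = (LINT x:({a<..} \<inter> {0..1})|lebesgue. f x)"
      unfolding set_lebesgue_integral_def F_def by (rule Bochner_Integration.integral_cong) (auto simp: indicator_def)
    also have "\<dots> = integral ({a<..} \<inter> {0..1}) f"
      by (rule set_lebesgue_integral_eq_integral(2), rule set_integrable_subset[OF f]) auto
    also have "\<dots> = 0"
    proof (cases "a < 0")
      case True then have "{a<..} \<inter> {0..1} = {0..1::real}" by auto
      then show ?thesis using z[of 1] by simp
    next
      case False
      show ?thesis
      proof (cases "a < 1")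
        case True
        have "integral ({a<..} \<inter> {0..1}) f = integral {a..1} f"
          by (rule integral_spike_set; rule negligible_subset[of "{a}"]) (use True False in auto)
        also have "integral {a..1} f = integral {0..1} f - integral {0..a} f"
          using Henstock_Kurzweil_Integration.integral_combine[where a=0 and c=a and b=1, OF _ _ fint] fint False True by (simp add: algebra_simps)
        also have "\<dots> = 0" using z[of 1] z[of a] False True by simp
        finally show ?thesis .
      next
        case False then have "{a<..} \<inter> {0..1} = ({}::real set)" by auto
        then show ?thesis by simp
      qed
    qed
    finally show ?thesis .
  qed
  have univ: "(LINT x|lebesgue. F x) = 0"
  proof -
    have "(LINT x|lebesgue. F x) = (LINT x:{-1<..}|lebesgue. F x)"
      unfolding set_lebesgue_integral_def F_def by (rule Bochner_Integration.integral_cong) (auto simp: indicator_def)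
    then show ?thesis using basic by simp
  qed
  have dyn: "(LINT x:A|lebesgue. F x) = 0" if A: "A \<in> sets borel" for A
  proof -
    have A': "A \<in> sigma_sets UNIV (range greaterThan)" using A by (simp add: borel_Ioi)
    have IS: "Int_stable (range greaterThan :: real set set)"
      unfolding Int_stable_def
    proof (clarify)
      fix a b :: real
      have "{a<..} \<inter> {b<..} = {max a b<..}" by auto
      then show "{a<..} \<inter> {b<..} \<in> range greaterThan" by blast
    qed
    show ?thesis
    proof (rule sigma_sets_induct_disjoint[OF IS _ A'])
      fix B :: "real set" assume "B \<in> range greaterThan" then show "(LINT x:B|lebesgue. F x) = 0" using basic by auto
    next
      show "(LINT x:{}|lebesgue. F x) = 0" by (simp add: set_lebesgue_integral_def)
    next
      fix B :: "real set" assume B: "B \<in> sigma_sets UNIV (range greaterThan)" and PB: "(LINT x:B|lebesgue. F x) = 0"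
      have Bs: "B \<in> sets lebesgue" using B by (intro borel_sets_lebesgue) (simp add: borel_Ioi)
      have "(LINT x:(UNIV - B)|lebesgue. F x) = (LINT x|lebesgue. F x - indicator B x *\<^sub>R F x)"
        unfolding set_lebesgue_integral_def by (rule Bochner_Integration.integral_cong) (auto simp: indicator_def)
      also have "\<dots> = (LINT x|lebesgue. F x) - (LINT x:B|lebesgue. F x)"
        unfolding set_lebesgue_integral_def
        by (rule Bochner_Integration.integral_diff[OF intF integrable_mult_indicator[OF Bs intF]])
      finally show "(LINT x:(UNIV - B)|lebesgue. F x) = 0" using univ PB by simp
    next
      fix B :: "nat \<Rightarrow> real set" assume dj: "disjoint_family B" and Br: "range B \<subseteq> sigma_sets UNIV (range greaterThan)"
        and PB: "\<And>i. (LINT x:B i|lebesgue. F x) = 0"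
      have Bs: "B i \<in> sets lebesgue" for i using Br by (intro borel_sets_lebesgue) (auto simp: borel_Ioi)
      have Us: "(\<Union>i. B i) \<in> sets lebesgue" using Bs by auto
      have "(LINT x:(\<Union>i. B i)|lebesgue. F x) = (\<Sum>i. (LINT x:(B i)|lebesgue. F x))"
        by (rule lebesgue_integral_countable_add[OF Bs])
          (use dj integrable_mult_indicator[OF Us intF] in \<open>auto simp: disjoint_family_on_def set_integrable_def\<close>)
      then show "(LINT x:(\<Union>i. B i)|lebesgue. F x) = 0" using PB by simp
    qed auto
  qed
  have Fm: "F \<in> borel_measurable (completion lborel)" using intF by auto
  obtain F' where F'm: "F' \<in> borel_measurable lborel" and ae: "AE x in lborel. F x = F' x"
    using completion_ex_borel_measurable_real[OF Fm] by blast
  have aec: "AE x in lebesgue. F x = F' x" using ae by (simp add: AE_completion_iff)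
  have intF': "integrable lborel F'"
  proof -
    have "integrable lebesgue F'" by (rule integrable_cong_AE_imp[OF intF _ aec]) (use F'm measurable_completion in blast)
    then show ?thesis using F'm by (simp add: integrable_completion)
  qed
  have "AE x in lborel. F' x = 0"
  proof (rule density_unique_real[OF intF'])
    show "integrable lborel (\<lambda>x. 0::real)" by simp
    fix A :: "real set" assume A: "A \<in> sets lborel"
    have "(LINT x:A|lborel. F' x) = (LINT x:A|lebesgue. F' x)"
      unfolding set_lebesgue_integral_def using A F'm by (simp add: integral_completion)
    also have "\<dots> = (LINT x:A|lebesgue. F x)"
      unfolding set_lebesgue_integral_def
    proof (rule integral_cong_AE)
      have As: "A \<in> sets lebesgue" using A by (simp add: borel_sets_lebesgue)
      have F'c: "F' \<in> borel_measurable lebesgue" using F'm measurable_completion by blast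
      show "(\<lambda>x. indicat_real A x *\<^sub>R F' x) \<in> borel_measurable lebesgue"
        "(\<lambda>x. indicat_real A x *\<^sub>R F x) \<in> borel_measurable lebesgue"
        using As F'c Fm by (auto intro!: borel_measurable_times borel_measurable_indicator)
      show "AE x in lebesgue. indicat_real A x *\<^sub>R F' x = indicat_real A x *\<^sub>R F x"
        using aec by eventually_elim auto
    qed
    also have "\<dots> = 0" using dyn A by simp
    finally show "(LINT x:A|lborel. F' x) = (LINT x:A|lborel. 0)" by (simp add: set_lebesgue_integral_def)
  qed
  with ae have "AE x in lborel. F x = 0" by eventually_elim auto
  then show ?thesis by eventually_elim (auto simp: F_def)
qed

lemma wd_props:
  assumes "weak_deriv u g"
  shows "g absolutely_integrable_on {0..1}" "g integrable_on {0..1}"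
    "(\<lambda>s. (norm (g s))^2) integrable_on {0..1}"
    "\<And>t. t \<in> {0..1} \<Longrightarrow> u t = u 0 + integral {0..t} g"
proof -
  show "g absolutely_integrable_on {0..1}" using assms unfolding weak_deriv_def by blast
  then show "g integrable_on {0..1}" by (rule set_lebesgue_integral_eq_integral(1))
  show "(\<lambda>s. (norm (g s))^2) integrable_on {0..1}" using assms unfolding weak_deriv_def by blast
  show "\<And>t. t \<in> {0..1} \<Longrightarrow> u t = u 0 + integral {0..t} g" using assms unfolding weak_deriv_def by blast
qed

lemma wd_sub_integrable:
  assumes "weak_deriv u g" "0 \<le> a" "b \<le> 1"
  shows "g integrable_on {a..b}"
  using wd_props(2)[OF assms(1)] by (rule integrable_on_subinterval) (use assms in auto)

lemma weak_deriv_unique: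
  assumes p: "weak_deriv u p" and q: "weak_deriv u q"
  shows "AE x in lborel. x \<in> {0..1} \<longrightarrow> p x = q x"
proof -
  have ai: "(\<lambda>x. p x - q x) absolutely_integrable_on {0..1}"
    using wd_props(1)[OF p] wd_props(1)[OF q] by (rule set_integral_diff(1))
  have z: "integral {0..s} (\<lambda>x. p x - q x) = 0" if s: "s \<in> {0..1}" for s
  proof -
    have "integral {0..s} (\<lambda>x. p x - q x) = integral {0..s} p - integral {0..s} q"
      by (rule integral_diff) (use wd_sub_integrable[OF p] wd_sub_integrable[OF q] s in auto)
    also have "\<dots> = 0" using wd_props(4)[OF p s] wd_props(4)[OF q s] by simp
    finally show ?thesis .
  qed
  have "AE x in lborel. x \<in> {0..1} \<longrightarrow> (Re \<circ> (\<lambda>x. p x - q x)) x = 0"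
  proof (rule ae_zero_if_integrals_zero)
    show "(Re \<circ> (\<lambda>x. p x - q x)) absolutely_integrable_on {0..1}"
      using ai bounded_linear_Re by (rule absolutely_integrable_linear)
    fix s :: real assume s: "s \<in> {0..1}"
    have "(\<lambda>x. p x - q x) integrable_on {0..s}"
      by (rule integrable_on_subinterval[OF set_lebesgue_integral_eq_integral(1)[OF ai]]) (use s in auto)
    then have "integral {0..s} (Re \<circ> (\<lambda>x. p x - q x)) = Re (integral {0..s} (\<lambda>x. p x - q x))"
      by (rule integral_linear[OF _ bounded_linear_Re])
    then show "integral {0..s} (Re \<circ> (\<lambda>x. p x - q x)) = 0" using z[OF s] by simp
  qed
  moreover have "AE x in lborel. x \<in> {0..1} \<longrightarrow> (Im \<circ> (\<lambda>x. p x - q x)) x = 0"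
  proof (rule ae_zero_if_integrals_zero)
    show "(Im \<circ> (\<lambda>x. p x - q x)) absolutely_integrable_on {0..1}"
      using ai bounded_linear_Im by (rule absolutely_integrable_linear)
    fix s :: real assume s: "s \<in> {0..1}"
    have "(\<lambda>x. p x - q x) integrable_on {0..s}"
      by (rule integrable_on_subinterval[OF set_lebesgue_integral_eq_integral(1)[OF ai]]) (use s in auto)
    then have "integral {0..s} (Im \<circ> (\<lambda>x. p x - q x)) = Im (integral {0..s} (\<lambda>x. p x - q x))"
      by (rule integral_linear[OF _ bounded_linear_Im])
    then show "integral {0..s} (Im \<circ> (\<lambda>x. p x - q x)) = 0" using z[OF s] by simp
  qed
  ultimately show ?thesis
  proof eventually_elim
    case (elim x)
    show ?case
    proof
      assume x: "x \<in> {0..1}"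
      have "p x - q x = 0" using elim x unfolding o_def complex_eq_iff by simp
      then show "p x = q x" by simp
    qed
  qed
qed

lemma h1d_wd: assumes "H1 u" shows "weak_deriv u (h1d u)"
  using assms unfolding H1_def h1d_def by (rule someI_ex[of "weak_deriv u"])

lemma wd_cont:
  assumes "weak_deriv u g" shows "continuous_on {0..1} u"
proof -
  have "continuous_on {0..1} (\<lambda>t. u 0 + integral {0..t} g)"
    by (rule continuous_on_add[OF continuous_on_const indefinite_integral_continuous_1[OF wd_props(2)[OF assms]]])
  then show ?thesis by (rule continuous_on_eq) (rule sym, rule wd_props(4)[OF assms], assumption)
qed

lemma L1_L2:
  fixes f :: "real \<Rightarrow> real"
  assumes f: "f integrable_on {0..1}" and f2: "(\<lambda>x. (f x)^2) integrable_on {0..1}"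
  shows "(integral {0..1} f)^2 \<le> integral {0..1} (\<lambda>x. (f x)^2)"
proof -
  define c where "c = integral {0..1} f"
  have i1: "(\<lambda>x. 2 * c * f x) integrable_on {0..1}"
    using integrable_on_cmult_left[OF f, of "2*c"] by simp
  have i2: "(\<lambda>x. (f x)^2 - 2 * c * f x) integrable_on {0..1}"
    using f2 i1 by (rule integrable_diff)
  have e1: "integral {0..1} (\<lambda>x. 2 * c * f x) = 2 * c * c"
    unfolding c_def by (rule integral_mult_right)
  have "0 \<le> integral {0..1} (\<lambda>x. ((f x)^2 - 2 * c * f x) + c^2)"
  proof (rule integral_nonneg)
    show "(\<lambda>x. ((f x)^2 - 2 * c * f x) + c^2) integrable_on {0..1}"
      using i2 by (intro integrable_add integrable_const_ivl) auto
    fix x show "0 \<le> ((f x)^2 - 2 * c * f x) + c^2"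
      using zero_le_power2[of "f x - c"] by (simp add: power2_eq_square algebra_simps)
  qed
  also have "integral {0..1} (\<lambda>x. ((f x)^2 - 2 * c * f x) + c^2) = integral {0..1} (\<lambda>x. (f x)^2 - 2 * c * f x) + c^2"
    using i2 by (subst integral_add) auto
  also have "integral {0..1} (\<lambda>x. (f x)^2 - 2 * c * f x) = integral {0..1} (\<lambda>x. (f x)^2) - 2 * c * c"
    using f2 i1 e1 by (subst integral_diff) auto
  finally show ?thesis unfolding c_def[symmetric] by (simp add: power2_eq_square)
qed

lemma wd_diff_bound:
  assumes g: "weak_deriv u g" and s: "s \<in> {0..1}"
  shows "(norm (u s - u 0))^2 \<le> integral {0..1} (\<lambda>x. (norm (g x))^2)"
proof -
  have ng: "(\<lambda>x. norm (g x)) integrable_on {0..1}"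
    using wd_props(1)[OF g] by (simp add: absolutely_integrable_on_def)
  have "u s - u 0 = integral {0..s} g" using wd_props(4)[OF g s] by simp
  then have "norm (u s - u 0) \<le> integral {0..s} (\<lambda>x. norm (g x))"
    using integral_norm_bound_integral[of g "{0..s}" "\<lambda>x. norm (g x)"]
      wd_sub_integrable[OF g, of 0 s] integrable_on_subinterval[OF ng, of 0 s] s by auto
  also have "\<dots> \<le> integral {0..1} (\<lambda>x. norm (g x))"
    by (rule integral_subset_le) (use s ng integrable_on_subinterval[OF ng, of 0 s] in auto)
  finally have 1: "norm (u s - u 0) \<le> integral {0..1} (\<lambda>x. norm (g x))" .
  have "(norm (u s - u 0))^2 \<le> (integral {0..1} (\<lambda>x. norm (g x)))^2"
    by (rule power_mono[OF 1]) simp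
  also have "\<dots> \<le> integral {0..1} (\<lambda>x. (norm (g x))^2)"
    by (rule L1_L2[OF ng wd_props(3)[OF g]])
  finally show ?thesis .
qed

definition Aint :: "(real \<Rightarrow> complex) \<Rightarrow> real" where
  "Aint u = integral {0..1} (\<lambda>s. (norm (h1d u s))^2)"

lemma Aint_nonneg: assumes "H1 u" shows "0 \<le> Aint u"
  unfolding Aint_def by (rule integral_nonneg[OF wd_props(3)[OF h1d_wd[OF assms]]]) simp

lemma Aint_ennreal:
  assumes "H1 u"
  shows "(\<integral>\<^sup>+ s \<in> {0..1}. ennreal ((norm (h1d u s))^2) \<partial>lborel) = ennreal (Aint u)"
proof -
  have "(\<integral>\<^sup>+ s \<in> {0..1}. ennreal ((norm (h1d u s))^2) \<partial>lborel)
     = (\<integral>\<^sup>+ s. ennreal (indicator {0..1} s * (norm (h1d u s))^2) \<partial>lborel)"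
    by (rule nn_integral_cong) (auto simp: indicator_def)
  also have "\<dots> = ennreal (Aint u)"
    unfolding Aint_def
    by (rule nn_integral_has_integral_lebesgue) (use wd_props(3)[OF h1d_wd[OF assms]] in auto)
  finally show ?thesis .
qed

definition Fz :: "real \<Rightarrow> real \<Rightarrow> complex \<Rightarrow> ennreal" where
  "Fz h \<beta> z = (if z = 0 then \<infinity> else ennreal (h - Vb \<beta> z))"

lemma Vb_nonpos: "\<beta> \<ge> 0 \<Longrightarrow> Vb \<beta> z \<le> 0"
proof -
  assume b: "\<beta> \<ge> 0"
  have "0 \<le> 1 / cmod z" "0 \<le> \<beta> / (cmod z)^2" using b by auto
  then show ?thesis unfolding Vb_def by linarith
qed

lemma Fz_ge: "\<beta> \<ge> 0 \<Longrightarrow> ennreal h \<le> Fz h \<beta> z"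
  unfolding Fz_def using Vb_nonpos[of \<beta> z] by (auto intro!: ennreal_leI)

lemma Mfun_alt: "Mfun h \<beta> u = ennreal (1/2) *
     (\<integral>\<^sup>+ s \<in> {0..1}. ennreal ((norm (h1d u s))^2) \<partial>lborel) *
     (\<integral>\<^sup>+ s \<in> {0..1}. Fz h \<beta> (u s) \<partial>lborel)"
  unfolding Mfun_def Fz_def by simp

lemma B_ge:
  fixes u :: "real \<Rightarrow> complex"
  assumes "\<beta> \<ge> 0"
  shows "ennreal h \<le> (\<integral>\<^sup>+ s \<in> {0..1}. Fz h \<beta> (u s) \<partial>lborel)"
proof -
  have "(\<integral>\<^sup>+ (s::real) \<in> {0..1}. ennreal h \<partial>lborel) \<le> (\<integral>\<^sup>+ s \<in> {0..1}. Fz h \<beta> (u s) \<partial>lborel)"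
    by (intro nn_integral_mono) (auto simp: indicator_def Fz_ge[OF assms])
  moreover have "(\<integral>\<^sup>+ (s::real) \<in> {0..1}. ennreal h \<partial>lborel) = ennreal h * emeasure lborel {0..1::real}"
    by (rule nn_integral_cmult_indicator) simp
  moreover have "emeasure lborel {0..1::real} = 1" by simp
  ultimately show ?thesis by (metis mult.right_neutral)
qed

lemma Mfun_ge:
  fixes u :: "real \<Rightarrow> complex"
  assumes "H1 u" "\<beta> \<ge> 0" and that: "h \<ge> 0"
  shows "ennreal (1/2 * Aint u * h) \<le> Mfun h \<beta> u"
proof -
  have m1: "ennreal (1/2 * Aint u * h) = ennreal (1/2 * Aint u) * ennreal h"
    using Aint_nonneg[OF assms(1)] that by (intro ennreal_mult) auto
  have m2: "ennreal (1/2 * Aint u) = ennreal (1/2) * ennreal (Aint u)"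
    using Aint_nonneg[OF assms(1)] that by (intro ennreal_mult) auto
  have "ennreal (1/2 * Aint u * h) = ennreal (1/2) * ennreal (Aint u) * ennreal h"
    unfolding m1 m2 ..
  also have "\<dots> \<le> ennreal (1/2) * ennreal (Aint u) * (\<integral>\<^sup>+ s \<in> {0..1}. Fz h \<beta> (u s) \<partial>lborel)"
    by (intro mult_left_mono B_ge assms) auto
  also have "\<dots> = Mfun h \<beta> u" unfolding Mfun_alt Aint_ennreal[OF assms(1)] ..
  finally show ?thesis .
qed

lemma Ind_zero_lower:
  assumes c: "continuous_on {0..1} u" and neg: "\<forall>s\<in>{0..1}. Im (u s) < 0"
  shows "Ind u = 0"
proof -
  define S where "S = {z::complex. \<i> \<bullet> z < 0}"
  have cS: "convex S" unfolding S_def by (rule convex_halfspace_lt)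
  have u0: "Im (u 0) < 0" "Im (u 1) < 0" using neg by auto
  have pu: "path u" using c by (simp add: path_def)
  have "winding_number (u +++ linepath (u 1) (u 0)) 0 = 0"
  proof (rule winding_number_zero_outside[OF _ cS])
    show "path (u +++ linepath (u 1) (u 0))"
      by (rule path_join_imp[OF pu path_linepath]) (simp add: pathfinish_def)
    show "pathfinish (u +++ linepath (u 1) (u 0)) = pathstart (u +++ linepath (u 1) (u 0))"
      by (simp add: pathstart_def pathfinish_def joinpaths_def linepath_def)
    show "0 \<notin> S" by (simp add: S_def)
    have "path_image u \<subseteq> S" using neg by (auto simp: path_image_def S_def complex_inner_i_left)
    moreover have "path_image (linepath (u 1) (u 0)) \<subseteq> S"
      unfolding path_image_linepath
      by (rule closed_segment_subset[OF _ _ cS]) (use u0 in \<open>auto simp: S_def complex_inner_i_left\<close>)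
    ultimately show "path_image (u +++ linepath (u 1) (u 0)) \<subseteq> S"
      using path_image_join_subset[of u "linepath (u 1) (u 0)"] by (simp only: Un_subset_iff subset_trans)
  qed
  then show ?thesis by (simp add: Ind_def)
qed

lemma integral_AE_eq:
  fixes f g :: "real \<Rightarrow> 'b::euclidean_space"
  assumes "AE x in lborel. x \<in> S \<longrightarrow> f x = g x"
  shows "integral S f = integral S g"
proof -
  have eq: "(f has_integral y) S = (g has_integral y) S" for y
    by (rule has_integral_AE) (use assms in auto)
  show ?thesis
  proof (cases "f integrable_on S")
    case True
    then have "(g has_integral integral S f) S" using eq integrable_integral by blast
    then show ?thesis by (rule integral_unique[symmetric])
  next
    case False
    then have "\<not> g integrable_on S" using eq unfolding integrable_on_def by blast
    then show ?thesis using False by (simp add: not_integrable_integral)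
  qed
qed

definition vt :: "complex \<Rightarrow> real \<Rightarrow> real \<Rightarrow> complex" where
  "vt e t = (\<lambda>s. min s t *\<^sub>R e)"

definition qt :: "complex \<Rightarrow> real \<Rightarrow> real \<Rightarrow> complex" where
  "qt e t = (\<lambda>s. if s \<in> {0..t} then e else 0)"

lemma integral_qt:
  fixes f :: "real \<Rightarrow> 'b::banach"
  shows "integral T (\<lambda>s. if s \<in> {0..t} then f s else 0) = integral ({0..t} \<inter> T) f"
  by (rule Henstock_Kurzweil_Integration.integral_restrict_Int)

lemma integrable_qt:
  fixes c :: "'b::euclidean_space" and t :: real
  assumes "t \<le> 1"
  shows "(\<lambda>s. if s \<in> {0..t} then c else 0) integrable_on {0..1}"
proof -
  have e: "{0..t} \<inter> {0..1} = {0..min t (1::real)}" by auto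
  have "(\<lambda>s. c) integrable_on ({0..t} \<inter> {0..1})"
    unfolding e by (rule integrable_const_ivl)
  then show ?thesis unfolding integrable_on_def by (subst has_integral_restrict_Int) blast
qed

lemma vt_wd:
  assumes t: "t \<in> {0..1}"
  shows "weak_deriv (vt e t) (qt e t)"
  unfolding weak_deriv_def
proof (intro conjI ballI)
  show "qt e t absolutely_integrable_on {0..1}"
    unfolding absolutely_integrable_on_def
  proof
    show "qt e t integrable_on {0..1}" unfolding qt_def by (rule integrable_qt) (use t in auto)
    have "(\<lambda>x. norm (qt e t x)) = (\<lambda>x. if x \<in> {0..t} then norm e else 0)"
      unfolding qt_def by auto
    then show "(\<lambda>x. norm (qt e t x)) integrable_on {0..1}"
      using integrable_qt[of t "norm e"] t by simp
  qed
  have "(\<lambda>x. (norm (qt e t x))^2) = (\<lambda>x. if x \<in> {0..t} then (norm e)^2 else 0)"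
    unfolding qt_def by auto
  then show "(\<lambda>x. (norm (qt e t x))^2) integrable_on {0..1}"
    using integrable_qt[of t "(norm e)^2"] t by simp
  fix s :: real assume s: "s \<in> {0..1}"
  have "integral {0..s} (qt e t) = integral ({0..t} \<inter> {0..s}) (\<lambda>_. e)"
    unfolding qt_def by (rule integral_qt)
  also have "{0..t} \<inter> {0..s} = {0..min s t}" by auto
  also have "integral {0..min s t} (\<lambda>_. e) = min s t *\<^sub>R e"
    using t s by simp
  finally show "vt e t s = vt e t 0 + integral {0..s} (qt e t)"
    using t unfolding vt_def by simp
qed

lemma H1_vt: "t \<in> {0..1} \<Longrightarrow> H1 (vt e t)"
  unfolding H1_def using vt_wd by blast

lemma H1_inner_vt:
  assumes w: "H1 w" and t: "t \<in> {0..1}"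
  shows "H1_inner w (vt e t) = integral {0..1} (\<lambda>s. min s t * (w s \<bullet> e)) + (w t - w 0) \<bullet> e"
proof -
  have ae: "AE x in lborel. x \<in> {0..1} \<longrightarrow> h1d (vt e t) x = qt e t x"
    by (rule weak_deriv_unique[OF h1d_wd[OF H1_vt[OF t]] vt_wd[OF t]])
  have "integral {0..1} (\<lambda>s. h1d w s \<bullet> h1d (vt e t) s) = integral {0..1} (\<lambda>s. h1d w s \<bullet> qt e t s)"
    by (rule integral_AE_eq) (use ae in \<open>eventually_elim, auto\<close>)
  also have "\<dots> = integral {0..1} (\<lambda>s. if s \<in> {0..t} then h1d w s \<bullet> e else 0)"
    unfolding qt_def by (rule integral_cong) auto
  also have "\<dots> = integral ({0..t} \<inter> {0..1}) (\<lambda>s. h1d w s \<bullet> e)"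
    by (rule integral_qt)
  also have "{0..t} \<inter> {0..1} = {0..t}" using t by auto
  also have "integral {0..t} (\<lambda>s. h1d w s \<bullet> e) = integral {0..t} (h1d w) \<bullet> e"
    using integral_linear[OF wd_sub_integrable[OF h1d_wd[OF w], of 0 t] bounded_linear_inner_left[of e]] t
    by (simp add: o_def)
  also have "integral {0..t} (h1d w) = w t - w 0"
    using wd_props(4)[OF h1d_wd[OF w] t] by simp
  finally have 1: "integral {0..1} (\<lambda>s. h1d w s \<bullet> h1d (vt e t) s) = (w t - w 0) \<bullet> e" .
  have 2: "(\<lambda>s. w s \<bullet> vt e t s) = (\<lambda>s. min s t * (w s \<bullet> e))"
    unfolding vt_def by (simp add: inner_scaleR_right)
  show ?thesis unfolding H1_inner_def 1 2 ..
qed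

lemma integral_id01: "integral {0..1} (\<lambda>s::real. s) = 1/2"
proof -
  have "((\<lambda>s::real. s) has_integral ((\<lambda>x. x^2/2) 1 - (\<lambda>x. x^2/2) 0)) {0..1}"
  proof (rule fundamental_theorem_of_calculus)
    fix x :: real
    have "((\<lambda>x::real. x^2/2) has_real_derivative x) (at x within {0..1})"
      by (auto intro!: derivative_eq_intros)
    then show "((\<lambda>x. x^2/2) has_vector_derivative x) (at x within {0..1})"
      by (simp add: has_real_derivative_iff_has_vector_derivative)
  qed simp
  then show ?thesis by (simp add: integral_unique)
qed

lemma ptwise_from_test:
  fixes d :: "nat \<Rightarrow> real \<Rightarrow> real" and K :: real
  assumes cont: "\<And>n. continuous_on {0..1} (d n)"
    and bnd: "\<And>n s. s \<in> {0..1} \<Longrightarrow> \<bar>d n s\<bar> \<le> K"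
    and conv: "\<And>t. t \<in> {0..1} \<Longrightarrow> (\<lambda>n. d n t + integral {0..1} (\<lambda>s. min s t * d n s)) \<longlonglongrightarrow> 0"
    and t: "t \<in> {0..1}"
  shows "(\<lambda>n. d n t) \<longlonglongrightarrow> 0"
proof -
  define J where "J n t = integral {0..1} (\<lambda>s. min s t * d n s)" for n t
  define E where "E n t = d n t + J n t" for n t
  define c where "c n = integral {0..1} (\<lambda>s. s * \<bar>d n s\<bar>)" for n
  have K0: "0 \<le> K" using bnd[of 0 0] by auto
  have intm: "(\<lambda>s. min s t' * d n s) integrable_on {0..1}" for n t'
    by (intro integrable_continuous_real continuous_intros cont)
  have intc: "(\<lambda>s. s * \<bar>d n s\<bar>) integrable_on {0..1}" for n
    by (intro integrable_continuous_real continuous_intros cont)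
  have Jbound: "\<bar>J n t'\<bar> \<le> c n" if t': "t' \<in> {0..1}" for n t'
  proof -
    have "norm (integral {0..1} (\<lambda>s. min s t' * d n s)) \<le> integral {0..1} (\<lambda>s. s * \<bar>d n s\<bar>)"
    proof (rule Henstock_Kurzweil_Integration.integral_norm_bound_integral[OF intm intc])
      fix s :: real assume s: "s \<in> {0..1}"
      have "\<bar>min s t'\<bar> \<le> s" using s t' by auto
      then show "norm (min s t' * d n s) \<le> s * \<bar>d n s\<bar>"
        by (simp add: abs_mult mult_right_mono)
    qed
    then show ?thesis unfolding J_def c_def by simp
  qed
  have cK: "c n \<le> K" for n
  proof -
    have "c n \<le> integral {0..1} (\<lambda>s::real. K)"
      unfolding c_def
    proof (rule Henstock_Kurzweil_Integration.integral_le[OF intc])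
      show "(\<lambda>s. K) integrable_on {0..1::real}" by (rule integrable_const_ivl)
      fix s :: real assume s: "s \<in> {0..1}"
      have "s * \<bar>d n s\<bar> \<le> 1 * K" using s bnd[OF s, of n] by (intro mult_mono) auto
      then show "s * \<bar>d n s\<bar> \<le> K" by simp
    qed
    then show ?thesis by simp
  qed
  have c0: "0 \<le> c n" for n
    unfolding c_def by (rule integral_nonneg[OF intc]) auto
  have Jlip: "dist (J n x) (J n y) \<le> K * dist x y" if x: "x \<in> {0..1}" and y: "y \<in> {0..1}" for n x y
  proof -
    have "J n x - J n y = integral {0..1} (\<lambda>s. min s x * d n s - min s y * d n s)"
      unfolding J_def by (rule integral_diff[OF intm intm, symmetric])
    also have "\<dots> = integral {0..1} (\<lambda>s. (min s x - min s y) * d n s)"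
      by (simp add: algebra_simps)
    finally have eq: "J n x - J n y = integral {0..1} (\<lambda>s. (min s x - min s y) * d n s)" .
    have "norm (integral {0..1} (\<lambda>s. (min s x - min s y) * d n s)) \<le> integral {0..1} (\<lambda>s::real. \<bar>x - y\<bar> * K)"
    proof (rule Henstock_Kurzweil_Integration.integral_norm_bound_integral)
      show "(\<lambda>s. (min s x - min s y) * d n s) integrable_on {0..1}"
        by (intro integrable_continuous_real continuous_intros cont)
      show "(\<lambda>s. \<bar>x - y\<bar> * K) integrable_on {0..1::real}" by (rule integrable_const_ivl)
      fix s :: real assume s: "s \<in> {0..1}"
      have "\<bar>min s x - min s y\<bar> \<le> \<bar>x - y\<bar>" by (auto simp: min_def)
      then show "norm ((min s x - min s y) * d n s) \<le> \<bar>x - y\<bar> * K"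
        using bnd[OF s, of n] by (simp add: abs_mult mult_mono)
    qed
    then show ?thesis using eq by (simp add: dist_real_def mult.commute)
  qed
  have Jcont: "continuous_on {0..1} (J n)" for n
    by (rule lipschitz_on_continuous_on[of K]) (rule lipschitz_onI[OF Jlip K0])
  have Econt: "continuous_on {0..1} (E n)" for n
    unfolding E_def by (intro continuous_intros cont Jcont)
  have dle: "\<bar>d n s\<bar> \<le> \<bar>E n s\<bar> + c n" if s: "s \<in> {0..1}" for n s
    using Jbound[OF s, of n] unfolding E_def by linarith
  have intE: "(\<lambda>s. s * \<bar>E n s\<bar>) integrable_on {0..1}" for n
    by (intro integrable_continuous_real continuous_intros Econt)
  have cle: "c n \<le> 2 * integral {0..1} (\<lambda>s. s * \<bar>E n s\<bar>)" for n
  proof -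
    have "integral {0..1} (\<lambda>s. s * \<bar>d n s\<bar>) \<le> integral {0..1} (\<lambda>s. s * \<bar>E n s\<bar> + s * c n)"
    proof (rule Henstock_Kurzweil_Integration.integral_le[OF intc])
      show "(\<lambda>s. s * \<bar>E n s\<bar> + s * c n) integrable_on {0..1}"
        by (intro integrable_add intE integrable_continuous_real continuous_intros)
      fix s :: real assume s: "s \<in> {0..1}"
      show "s * \<bar>d n s\<bar> \<le> s * \<bar>E n s\<bar> + s * c n"
        using mult_left_mono[OF dle[OF s, of n], of s] s by (simp add: algebra_simps)
    qed
    then have "c n \<le> integral {0..1} (\<lambda>s. s * \<bar>E n s\<bar> + s * c n)"
      by (simp only: c_def[of n, symmetric])
    also have "\<dots> = integral {0..1} (\<lambda>s. s * \<bar>E n s\<bar>) + integral {0..1} (\<lambda>s. s * c n)"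
      by (rule integral_add[OF intE]) (intro integrable_continuous_real continuous_intros)
    also have "integral {0..1} (\<lambda>s. s * c n) = integral {0..1} (\<lambda>s. s) * c n"
      by (rule integral_mult_left)
    also have "\<dots> = c n / 2" using integral_id01 by simp
    finally show ?thesis by simp
  qed
  have Ebnd: "norm (s * \<bar>E n s\<bar>) \<le> 2 * K" if s: "s \<in> {0..1}" for n s
  proof -
    have "\<bar>E n s\<bar> \<le> 2 * K" using Jbound[OF s, of n] cK[of n] bnd[OF s, of n] unfolding E_def by linarith
    then have "s * \<bar>E n s\<bar> \<le> 1 * (2 * K)" using s by (intro mult_mono) auto
    then show ?thesis using s by simp
  qed
  have limI: "(\<lambda>n. integral {0..1} (\<lambda>s. s * \<bar>E n s\<bar>)) \<longlonglongrightarrow> integral {0..1} (\<lambda>s::real. 0::real)"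
  proof (rule Equivalence_Lebesgue_Henstock_Integration.dominated_convergence(2)[of _ _ "\<lambda>s. 2 * K"])
    show "(\<lambda>s. s * \<bar>E n s\<bar>) integrable_on {0..1}" for n by (rule intE)
    show "(\<lambda>s. 2 * K) integrable_on {0..1::real}" by (rule integrable_const_ivl)
    show "norm (s * \<bar>E n s\<bar>) \<le> 2 * K" if "s \<in> {0..1}" for n s using Ebnd[OF that] .
    fix s :: real assume s: "s \<in> {0..1}"
    have "(\<lambda>n. E n s) \<longlonglongrightarrow> 0" using conv[OF s] unfolding E_def J_def .
    then have "(\<lambda>n. s * \<bar>E n s\<bar>) \<longlonglongrightarrow> s * 0"
      by (intro tendsto_mult tendsto_const tendsto_rabs_zero)
    then show "(\<lambda>n. s * \<bar>E n s\<bar>) \<longlonglongrightarrow> 0" by simp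
  qed
  then have limI': "(\<lambda>n. 2 * integral {0..1} (\<lambda>s. s * \<bar>E n s\<bar>)) \<longlonglongrightarrow> 0"
    using tendsto_mult_right_zero by fastforce
  have climit: "c \<longlonglongrightarrow> 0"
    by (rule tendsto_sandwich[OF _ _ tendsto_const limI']) (use c0 cle in auto)
  have "(\<lambda>n. E n t) \<longlonglongrightarrow> 0" using conv[OF t] unfolding E_def J_def .
  then have "(\<lambda>n. \<bar>E n t\<bar> + c n) \<longlonglongrightarrow> 0"
    using tendsto_add_zero[OF tendsto_rabs_zero climit] by blast
  then show ?thesis
    by (rule Lim_null_comparison[rotated]) (use dle[OF t] in auto)
qed

lemma H1_cont: "H1 u \<Longrightarrow> continuous_on {0..1} u"
  by (rule wd_cont[OF h1d_wd])

lemma weak_ptwise_e: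
  assumes wc: "weak_conv_H1 us u"
    and bnd: "\<And>n s. s \<in> {0..1} \<Longrightarrow> norm (us n s) \<le> R" "\<And>s. s \<in> {0..1} \<Longrightarrow> norm (u s) \<le> R"
    and start: "\<And>n. us n 0 = u 0"
    and t: "t \<in> {0..1}" and e: "norm e = 1"
  shows "(\<lambda>n. (us n t - u t) \<bullet> e) \<longlonglongrightarrow> 0"
proof (rule ptwise_from_test[where K = "2 * R"])
  have Hu: "H1 u" and Hus: "\<And>n. H1 (us n)"
    and wl: "\<And>v. H1 v \<Longrightarrow> (\<lambda>n. H1_inner (us n) v) \<longlonglongrightarrow> H1_inner u v"
    using wc unfolding weak_conv_H1_def by auto
  show "continuous_on {0..1} (\<lambda>s. (us n s - u s) \<bullet> e)" for n
    by (intro continuous_intros H1_cont Hu Hus)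
  show "\<bar>(us n s - u s) \<bullet> e\<bar> \<le> 2 * R" if s: "s \<in> {0..1}" for n s
  proof -
    have "\<bar>(us n s - u s) \<bullet> e\<bar> \<le> norm (us n s - u s) * norm e" by (rule Cauchy_Schwarz_ineq2)
    also have "\<dots> \<le> norm (us n s) + norm (u s)" using e norm_triangle_ineq4 by simp
    also have "\<dots> \<le> 2 * R" using bnd(1)[OF s, of n] bnd(2)[OF s] by linarith
    finally show ?thesis .
  qed
  fix t' :: real assume t': "t' \<in> {0..1}"
  have lim: "(\<lambda>n. H1_inner (us n) (vt e t') - H1_inner u (vt e t')) \<longlonglongrightarrow> 0"
    using wl[OF H1_vt[OF t']] by (rule LIM_zero)
  have intm: "(\<lambda>s. min s t' * (w s \<bullet> e)) integrable_on {0..1}" if "H1 w" for w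
    by (intro integrable_continuous_real continuous_intros H1_cont that)
  have "H1_inner (us n) (vt e t') - H1_inner u (vt e t') =
     (us n t' - u t') \<bullet> e + integral {0..1} (\<lambda>s. min s t' * ((us n s - u s) \<bullet> e))" for n
  proof -
    have "integral {0..1} (\<lambda>s. min s t' * ((us n s - u s) \<bullet> e)) =
        integral {0..1} (\<lambda>s. min s t' * (us n s \<bullet> e) - min s t' * (u s \<bullet> e))"
      by (simp add: inner_diff_left algebra_simps)
    also have "\<dots> = integral {0..1} (\<lambda>s. min s t' * (us n s \<bullet> e)) - integral {0..1} (\<lambda>s. min s t' * (u s \<bullet> e))"
      by (rule integral_diff[OF intm[OF Hus] intm[OF Hu]])
    finally show ?thesis
      unfolding H1_inner_vt[OF Hus t'] H1_inner_vt[OF Hu t'] using start[of n]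
      by (simp add: inner_diff_left algebra_simps)
  qed
  then show "(\<lambda>n. (us n t' - u t') \<bullet> e + integral {0..1} (\<lambda>s. min s t' * ((us n s - u s) \<bullet> e))) \<longlonglongrightarrow> 0"
    using lim by simp
qed (rule t)

lemma weak_ptwise:
  assumes wc: "weak_conv_H1 us u"
    and bnd: "\<And>n s. s \<in> {0..1} \<Longrightarrow> norm (us n s) \<le> R" "\<And>s. s \<in> {0..1} \<Longrightarrow> norm (u s) \<le> R"
    and start: "\<And>n. us n 0 = u 0"
    and t: "t \<in> {0..1}"
  shows "(\<lambda>n. us n t) \<longlonglongrightarrow> u t"
proof -
  have 1: "(\<lambda>n. (us n t - u t) \<bullet> 1) \<longlonglongrightarrow> 0"
    using weak_ptwise_e[OF wc bnd start t, of 1] by simp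
  have 2: "(\<lambda>n. (us n t - u t) \<bullet> \<i>) \<longlonglongrightarrow> 0"
    using weak_ptwise_e[OF wc bnd start t, of \<i>] by simp
  have "(\<lambda>n. us n t - u t) \<longlonglongrightarrow> 0"
    unfolding tendsto_complex_iff using 1 2 by (simp add: complex_inner_1_right complex_inner_i_right)
  then show ?thesis by (rule LIM_zero_cancel)
qed

lemma L2_prod_integrable:
  fixes f g :: "real \<Rightarrow> complex"
  assumes f: "f absolutely_integrable_on {0..1}" "(\<lambda>s. (norm (f s))^2) integrable_on {0..1}"
    and g: "g absolutely_integrable_on {0..1}" "(\<lambda>s. (norm (g s))^2) integrable_on {0..1}"
  shows "(\<lambda>s. f s \<bullet> g s) integrable_on {0..1}"
proof (rule measurable_bounded_by_integrable_imp_integrable)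
  have fm: "f \<in> borel_measurable (lebesgue_on {0..1})"
    using f(1) absolutely_integrable_measurable[of "{0..1}" f] by auto
  have gm: "g \<in> borel_measurable (lebesgue_on {0..1})"
    using g(1) absolutely_integrable_measurable[of "{0..1}" g] by auto
  show "(\<lambda>s. f s \<bullet> g s) \<in> borel_measurable (lebesgue_on {0..1})"
    using fm gm by (rule borel_measurable_inner)
  show "(\<lambda>s. ((norm (f s))^2 + (norm (g s))^2) / 2) integrable_on {0..1}"
    using integrable_add[OF f(2) g(2)] integrable_on_divide by blast
  fix s :: real
  have "norm (f s \<bullet> g s) \<le> norm (f s) * norm (g s)"
    using Cauchy_Schwarz_ineq2 by simp
  also have "\<dots> \<le> ((norm (f s))^2 + (norm (g s))^2) / 2"
    using zero_le_power2[of "norm (f s) - norm (g s)"] by (simp add: power2_eq_square algebra_simps)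
  finally show "norm (f s \<bullet> g s) \<le> ((norm (f s))^2 + (norm (g s))^2) / 2" .
qed simp

lemma H1_prod_integrable:
  assumes "H1 u" "H1 v"
  shows "(\<lambda>s. h1d u s \<bullet> h1d v s) integrable_on {0..1}"
  using wd_props(1,3)[OF h1d_wd[OF assms(1)]] wd_props(1,3)[OF h1d_wd[OF assms(2)]]
  by (intro L2_prod_integrable) auto

lemma Aint_alt: "Aint u = integral {0..1} (\<lambda>s. h1d u s \<bullet> h1d u s)"
  unfolding Aint_def by (simp add: power2_norm_eq_inner)

lemma Aint_lsc:
  assumes wc: "weak_conv_H1 us u"
    and bnd: "\<And>n s. s \<in> {0..1} \<Longrightarrow> norm (us n s) \<le> R" "\<And>s. s \<in> {0..1} \<Longrightarrow> norm (u s) \<le> R"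
    and start: "\<And>n. us n 0 = u 0"
  shows "ennreal (Aint u) \<le> liminf (\<lambda>n. ennreal (Aint (us n)))"
proof -
  have Hu: "H1 u" and Hus: "\<And>n. H1 (us n)"
    and wl: "\<And>v. H1 v \<Longrightarrow> (\<lambda>n. H1_inner (us n) v) \<longlonglongrightarrow> H1_inner u v"
    using wc unfolding weak_conv_H1_def by auto
  define P where "P n = integral {0..1} (\<lambda>s. h1d (us n) s \<bullet> h1d u s)" for n
  have intu: "(\<lambda>s. w s \<bullet> u s) integrable_on {0..1}" if "H1 w" for w
    by (intro integrable_continuous_real continuous_intros H1_cont that Hu)
  have L2: "(\<lambda>n. integral {0..1} (\<lambda>s. us n s \<bullet> u s)) \<longlonglongrightarrow> integral {0..1} (\<lambda>s. u s \<bullet> u s)"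
  proof (rule Equivalence_Lebesgue_Henstock_Integration.dominated_convergence(2)[of _ _ "\<lambda>s. R * R"])
    show "(\<lambda>s. us n s \<bullet> u s) integrable_on {0..1}" for n by (rule intu[OF Hus])
    show "(\<lambda>s::real. R * R) integrable_on {0..1}" by (rule integrable_const_ivl)
    show "norm (us n s \<bullet> u s) \<le> R * R" if s: "s \<in> {0..1}" for n s
    proof -
      have "norm (us n s \<bullet> u s) \<le> norm (us n s) * norm (u s)"
        using Cauchy_Schwarz_ineq2 by simp
      also have "\<dots> \<le> R * R" using bnd(1)[OF s, of n] bnd(2)[OF s] by (metis mult_mono norm_ge_zero order_trans)
      finally show ?thesis .
    qed
    fix s :: real assume s: "s \<in> {0..1}"
    show "(\<lambda>n. us n s \<bullet> u s) \<longlonglongrightarrow> u s \<bullet> u s"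
      by (intro tendsto_inner tendsto_const weak_ptwise[OF wc bnd start s])
  qed
  have "(\<lambda>n. H1_inner (us n) u - integral {0..1} (\<lambda>s. us n s \<bullet> u s)) \<longlonglongrightarrow>
      H1_inner u u - integral {0..1} (\<lambda>s. u s \<bullet> u s)"
    by (intro tendsto_diff wl[OF Hu] L2)
  then have Plim: "P \<longlonglongrightarrow> Aint u"
    unfolding H1_inner_def P_def Aint_alt by simp
  have Pbound: "2 * P n - Aint u \<le> Aint (us n)" for n
  proof -
    have ip: "(\<lambda>s. h1d (us n) s \<bullet> h1d u s) integrable_on {0..1}"
      by (rule H1_prod_integrable[OF Hus Hu])
    have iu: "(\<lambda>s. h1d u s \<bullet> h1d u s) integrable_on {0..1}"
      by (rule H1_prod_integrable[OF Hu Hu])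
    have iun: "(\<lambda>s. h1d (us n) s \<bullet> h1d (us n) s) integrable_on {0..1}"
      by (rule H1_prod_integrable[OF Hus Hus])
    have "integral {0..1} (\<lambda>s. 2 * (h1d (us n) s \<bullet> h1d u s) - h1d u s \<bullet> h1d u s)
        \<le> integral {0..1} (\<lambda>s. h1d (us n) s \<bullet> h1d (us n) s)"
    proof (rule Henstock_Kurzweil_Integration.integral_le[OF _ iun])
      show "(\<lambda>s. 2 * (h1d (us n) s \<bullet> h1d u s) - h1d u s \<bullet> h1d u s) integrable_on {0..1}"
        using integrable_on_cmult_left[OF ip, of 2] iu by (intro integrable_diff) auto
      fix s :: real
      have "0 \<le> (h1d (us n) s - h1d u s) \<bullet> (h1d (us n) s - h1d u s)" by simp
      then show "2 * (h1d (us n) s \<bullet> h1d u s) - h1d u s \<bullet> h1d u s \<le> h1d (us n) s \<bullet> h1d (us n) s"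
        by (simp add: inner_diff_left inner_diff_right inner_commute)
    qed
    also have "integral {0..1} (\<lambda>s. 2 * (h1d (us n) s \<bullet> h1d u s) - h1d u s \<bullet> h1d u s)
        = 2 * P n - Aint u"
      unfolding P_def Aint_alt
      using integrable_on_cmult_left[OF ip, of 2] iu
      by (subst integral_diff) (auto simp: integral_mult_right)
    finally show ?thesis unfolding Aint_alt[of "us n"] .
  qed
  show ?thesis
  proof (subst le_Liminf_iff, intro allI impI)
    fix y :: ennreal assume y: "y < ennreal (Aint u)"
    then obtain r where r: "0 \<le> r" "y = ennreal r"
      by (cases y) auto
    have rA: "r < Aint u" using y r by (simp add: ennreal_less_iff)
    have "(\<lambda>n. 2 * P n - Aint u) \<longlonglongrightarrow> 2 * Aint u - Aint u"
      by (intro tendsto_diff tendsto_mult tendsto_const Plim)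
    then have "eventually (\<lambda>n. r < 2 * P n - Aint u) sequentially"
      by (rule order_tendstoD) (use rA in simp)
    then show "eventually (\<lambda>n. y < ennreal (Aint (us n))) sequentially"
    proof eventually_elim
      case (elim n)
      then have "r < Aint (us n)" using Pbound[of n] by linarith
      then have "ennreal r < ennreal (Aint (us n))" using r by (intro ennreal_lessI) auto
      then show ?case using r by simp
    qed
  qed
qed

lemma Fz_measurable: "Fz h \<beta> \<in> borel_measurable borel"
  unfolding Fz_def Vb_def by measurable

lemma Fz_tendsto:
  assumes z: "(\<lambda>n. z n) \<longlonglongrightarrow> z0" and h: "h \<ge> 0" and b: "\<beta> \<ge> 0"
  shows "(\<lambda>n. Fz h \<beta> (z n)) \<longlonglongrightarrow> Fz h \<beta> z0"
proof (cases "z0 = 0")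
  case False
  have ev: "eventually (\<lambda>n. z n \<noteq> 0) sequentially"
    using z False by (rule tendsto_imp_eventually_ne)
  have "(\<lambda>n. ennreal (h - Vb \<beta> (z n))) \<longlonglongrightarrow> ennreal (h - Vb \<beta> z0)"
    unfolding Vb_def using False by (intro tendsto_intros z) auto
  then have "(\<lambda>n. Fz h \<beta> (z n)) \<longlonglongrightarrow> ennreal (h - Vb \<beta> z0)"
    by (rule Lim_transform_eventually) (use ev in \<open>eventually_elim, simp add: Fz_def\<close>)
  then show ?thesis using False by (simp add: Fz_def)
next
  case True
  have nz: "(\<lambda>n. norm (z n)) \<longlonglongrightarrow> 0" using z True by (simp add: tendsto_norm_zero_iff)
  show ?thesis unfolding True
  proof (rule order_tendstoI)
    fix a assume "a < Fz h \<beta> 0"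
    then have a: "a < top" by (simp add: Fz_def)
    then obtain r where r: "0 \<le> r" "a = ennreal r" by (cases a) auto
    have "eventually (\<lambda>n. norm (z n) < 1 / (r + 1)) sequentially"
      using nz by (rule order_tendstoD) (use r in simp)
    then show "eventually (\<lambda>n. a < Fz h \<beta> (z n)) sequentially"
    proof eventually_elim
      case (elim n)
      show ?case
      proof (cases "z n = 0")
        case True then show ?thesis using a by (simp add: Fz_def)
      next
        case False
        then have pos: "0 < norm (z n)" by simp
        have "r + 1 < 1 / norm (z n)"
          using elim pos r by (simp add: field_simps)
        moreover have "1 / norm (z n) \<le> h - Vb \<beta> (z n)"
          using h b pos unfolding Vb_def by (simp add: divide_nonneg_nonneg)
        ultimately have "r < h - Vb \<beta> (z n)" by linarith
        then have "ennreal r < ennreal (h - Vb \<beta> (z n))" using r by (intro ennreal_lessI) auto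
        then show ?thesis using False r by (simp add: Fz_def)
      qed
    qed
  qed (simp add: Fz_def)
qed

lemma B_lsc:
  fixes us :: "nat \<Rightarrow> real \<Rightarrow> complex" and u :: "real \<Rightarrow> complex"
  assumes cont: "\<And>n. continuous_on {0..1} (us n)"
    and pt: "\<And>t. t \<in> {0..1} \<Longrightarrow> (\<lambda>n. us n t) \<longlonglongrightarrow> u t"
    and h: "h \<ge> 0" and b: "\<beta> \<ge> 0"
  shows "(\<integral>\<^sup>+ s \<in> {0..1}. Fz h \<beta> (u s) \<partial>lborel) \<le> liminf (\<lambda>n. \<integral>\<^sup>+ s \<in> {0..1}. Fz h \<beta> (us n s) \<partial>lborel)"
proof -
  have meas: "(\<lambda>s. Fz h \<beta> (us n s) * indicator {0..1} s) \<in> borel_measurable lborel" for n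
  proof -
    have m1: "(\<lambda>s. indicator {0..1} s *\<^sub>R us n s) \<in> borel_measurable borel"
      by (rule borel_measurable_continuous_on_indicator[OF _ cont]) simp
    have "(\<lambda>s. Fz h \<beta> (indicator {0..1} s *\<^sub>R us n s) * indicator {0..1} s) \<in> borel_measurable borel"
      using measurable_compose[OF m1 Fz_measurable] by measurable
    moreover have "(\<lambda>s. Fz h \<beta> (indicator {0..1} s *\<^sub>R us n s) * indicator {0..1} s)
        = (\<lambda>s. Fz h \<beta> (us n s) * indicator {0..1} s)"
      by (auto simp: indicator_def)
    ultimately show ?thesis by simp
  qed
  have "(\<integral>\<^sup>+ s \<in> {0..1}. Fz h \<beta> (u s) \<partial>lborel)
      \<le> (\<integral>\<^sup>+ s. liminf (\<lambda>n. Fz h \<beta> (us n s) * indicator {0..1} s) \<partial>lborel)"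
  proof (intro nn_integral_mono)
    fix s :: real
    show "Fz h \<beta> (u s) * indicator {0..1} s \<le> liminf (\<lambda>n. Fz h \<beta> (us n s) * indicator {0..1} s)"
    proof (cases "s \<in> {0..1}")
      case True
      have "(\<lambda>n. Fz h \<beta> (us n s)) \<longlonglongrightarrow> Fz h \<beta> (u s)"
        by (rule Fz_tendsto[OF pt[OF True] h b])
      then have "liminf (\<lambda>n. Fz h \<beta> (us n s)) = Fz h \<beta> (u s)"
        by (intro lim_imp_Liminf) auto
      then show ?thesis using True by simp
    qed simp
  qed
  also have "\<dots> \<le> liminf (\<lambda>n. \<integral>\<^sup>+ s. Fz h \<beta> (us n s) * indicator {0..1} s \<partial>lborel)"
    by (rule nn_integral_liminf[OF meas])
  finally show ?thesis .
qed

lemma liminf_mult_ennreal: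
  fixes a b :: "nat \<Rightarrow> ennreal"
  shows "liminf a * liminf b \<le> liminf (\<lambda>n. a n * b n)"
proof -
  define A where "A n = (INF l\<in>{n..}. a l)" for n
  define B where "B n = (INF l\<in>{n..}. b l)" for n
  have monoA: "A i \<le> A j" if "i \<le> j" for i j
    unfolding A_def using that by (intro INF_mono) auto
  have monoB: "B i \<le> B j" if "i \<le> j" for i j
    unfolding B_def using that by (intro INF_mono) auto
  have "liminf a * liminf b = (SUP i. A i) * (SUP j. B j)"
    unfolding liminf_SUP_INF A_def B_def ..
  also have "\<dots> = (SUP i. SUP j. A i * B j)"
    by (simp add: SUP_mult_left_ennreal SUP_mult_right_ennreal, rule SUP_commute)
  also have "\<dots> \<le> (SUP n. INF l\<in>{n..}. a l * b l)"
  proof (intro SUP_least)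
    fix i j :: nat
    let ?m = "max i j"
    have "A i * B j \<le> A ?m * B ?m"
      by (intro mult_mono monoA monoB) auto
    also have "\<dots> \<le> (INF l\<in>{?m..}. a l * b l)"
    proof (intro INF_greatest)
      fix l assume "l \<in> {?m..}"
      then show "A ?m * B ?m \<le> a l * b l"
        unfolding A_def B_def by (intro mult_mono INF_lower) auto
    qed
    also have "\<dots> \<le> (SUP n. INF l\<in>{n..}. a l * b l)"
      by (rule SUP_upper) simp
    finally show "A i * B j \<le> (SUP n. INF l\<in>{n..}. a l * b l)" .
  qed
  also have "\<dots> = liminf (\<lambda>n. a n * b n)"
    unfolding liminf_SUP_INF ..
  finally show ?thesis .
qed

lemma Hk_props:
  assumes "u \<in> Hk D z0 z1 k"
  shows "H1 u" "\<And>s. s \<in> {0..1} \<Longrightarrow> u s \<in> D" "u 0 = z0" "u 1 = z1"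
  using assms unfolding Hk_def Hhat_def Coll_def by auto

lemma Aint_ge_L:
  assumes u: "u \<in> Hk D z0 z1 k" and k: "k \<noteq> 0" and z0: "Im z0 = - L" and L: "L \<ge> 0"
  shows "L^2 \<le> Aint u"
proof -
  have Hu: "H1 u" and u0: "u 0 = z0" using Hk_props[OF u] by auto
  have "\<exists>s\<in>{0..1}. L \<le> norm (u s - u 0)"
  proof (cases "u \<in> Coll D z0 z1")
    case True
    then obtain s where s: "s \<in> {0..1}" "u s = 0" unfolding Coll_def by auto
    have "L \<le> \<bar>Im z0\<bar>" using z0 by simp
    also have "\<dots> \<le> norm z0" by (rule abs_Im_le_cmod)
    finally show ?thesis using s u0 by (intro bexI[of _ s]) auto
  next
    case False
    then have uh: "u \<in> Hhat D z0 z1 k" using u unfolding Hk_def by auto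
    then have Iu: "Ind u = of_int k" unfolding Hhat_def by auto
    have "\<not> (\<forall>s\<in>{0..1}. Im (u s) < 0)"
    proof
      assume "\<forall>s\<in>{0..1}. Im (u s) < 0"
      then have "Ind u = 0" by (rule Ind_zero_lower[OF H1_cont[OF Hu]])
      then show False using Iu k by simp
    qed
    then obtain s where s: "s \<in> {0..1}" "Im (u s) \<ge> 0" by (auto simp: not_less)
    have "L \<le> Im (u s - u 0)" using s u0 z0 by simp
    also have "\<dots> \<le> \<bar>Im (u s - u 0)\<bar>" by simp
    also have "\<dots> \<le> norm (u s - u 0)" by (rule abs_Im_le_cmod)
    finally show ?thesis using s by blast
  qed
  then obtain s where s: "s \<in> {0..1}" "L \<le> norm (u s - u 0)" by blast
  have "L^2 \<le> (norm (u s - u 0))^2" using s L by (intro power_mono) auto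
  also have "\<dots> \<le> Aint u" unfolding Aint_def by (rule wd_diff_bound[OF h1d_wd[OF Hu] s(1)])
  finally show ?thesis .
qed

lemma H1_inner_self:
  assumes "H1 u" "\<And>s. s \<in> {0..1} \<Longrightarrow> norm (u s) \<le> R"
  shows "H1_inner u u \<le> R^2 + Aint u"
proof -
  have "integral {0..1} (\<lambda>s. u s \<bullet> u s) \<le> integral {0..1} (\<lambda>s::real. R^2)"
  proof (rule Henstock_Kurzweil_Integration.integral_le)
    show "(\<lambda>s. u s \<bullet> u s) integrable_on {0..1}"
      by (intro integrable_continuous_real continuous_intros H1_cont assms(1))
    show "(\<lambda>s::real. R^2) integrable_on {0..1}" by (rule integrable_const_ivl)
    fix s :: real assume s: "s \<in> {0..1}"
    have "u s \<bullet> u s = (norm (u s))^2" by (simp add: power2_norm_eq_inner)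
    also have "\<dots> \<le> R^2" using assms(2)[OF s] by (intro power_mono) auto
    finally show "u s \<bullet> u s \<le> R^2" .
  qed
  then show ?thesis unfolding H1_inner_def Aint_alt by simp
qed

lemma D_bounded:
  fixes Z Z' :: "real \<Rightarrow> complex"
  assumes "t0 < t1"
    and sol: "\<forall>t\<in>{t0..t1}. (Z has_vector_derivative Z' t) (at t)"
  shows "bounded (regionD Z t0 t1)"
proof -
  have "continuous_on {t0..t1} Z"
    using sol by (intro continuous_at_imp_continuous_on) (auto intro: has_vector_derivative_continuous)
  then have bZ: "bounded (Z ` {t0..t1})" by (intro compact_imp_bounded compact_continuous_image) auto
  have "path_image (\<lambda>s. Z (t0 + s * (t1 - t0))) \<subseteq> Z ` {t0..t1}"
  proof
    fix x assume "x \<in> path_image (\<lambda>s. Z (t0 + s * (t1 - t0)))"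
    then obtain s where s: "s \<in> {0..1}" "x = Z (t0 + s * (t1 - t0))" unfolding path_image_def by auto
    have "t0 + s * (t1 - t0) \<in> {t0..t1}"
    proof -
      have "s * (t1 - t0) \<le> 1 * (t1 - t0)" using s assms(1) by (intro mult_right_mono) auto
      moreover have "0 \<le> s * (t1 - t0)" using s assms(1) by simp
      ultimately show ?thesis by simp
    qed
    then show "x \<in> Z ` {t0..t1}" using s by auto
  qed
  then have b1: "bounded (path_image (\<lambda>s. Z (t0 + s * (t1 - t0))))" using bZ bounded_subset by blast
  have b2: "bounded (path_image (linepath (Z t1) (Z t0)))" by (simp add: compact_imp_bounded)
  have "bounded (path_image (orbit_loop Z t0 t1))"
    unfolding orbit_loop_def
    by (rule bounded_subset[OF _ path_image_join_subset]) (use b1 b2 in auto)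
  then show ?thesis unfolding regionD_def by (intro bounded_Un[THEN iffD2] conjI bounded_inside)
qed


lemma Mfun_H1:
  assumes "H1 u"
  shows "Mfun h \<beta> u = ennreal (1/2) * ennreal (Aint u) * (\<integral>\<^sup>+ s \<in> {0..1}. Fz h \<beta> (u s) \<partial>lborel)"
  unfolding Mfun_alt Aint_ennreal[OF assms] ..

theorem proposition2p7:
  fixes L h \<beta> t0 t1 :: real and Z Z' :: "real \<Rightarrow> complex"
    and D :: "complex set" and l' :: "complex set"
  assumes "L > 0" "h > 0" "\<beta> > 0" "t0 < t1"
    and sol: "\<forall>t\<in>{t0..t1}. Z t \<noteq> 0 \<and> (Z has_vector_derivative Z' t) (at t) \<and>
               (Z' has_vector_derivative - gradVb \<beta> (Z t)) (at t) \<and>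
               (1/2) * (norm (Z' t))^2 + Vb \<beta> (Z t) = h"
    and "Im (Z t0) = - L" and "Im (Z t1) = - L"
    and "\<forall>t\<in>{t0<..<t1}. Im (Z t) > - L"
    and "Ind (\<lambda>s. Z (t0 + s * (t1 - t0))) = 1"
    and "vangle (Z' t0) 1 < pi / 2"
    and "vangle (-1) (Z' t1) > pi / 2"
    and "D = regionD Z t0 t1"
    and "l' = closed_segment (Z t0) (Z t1)"
  shows "\<forall>k::int. k \<noteq> 0 \<longrightarrow>
     (\<exists>C>0. \<forall>z0\<in>l'. \<forall>z1\<in>l'. \<forall>u\<in>Hk D z0 z1 k. ennreal C \<le> Mfun h \<beta> u) \<and>
     (\<forall>z0\<in>l'. \<forall>z1\<in>l'.
        (\<forall>us u. (\<forall>n. us n \<in> Hk D z0 z1 k) \<longrightarrow> u \<in> Hk D z0 z1 k \<longrightarrow> weak_conv_H1 us u \<longrightarrow>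
           Mfun h \<beta> u \<le> liminf (\<lambda>n. Mfun h \<beta> (us n))) \<and>
        (\<forall>B::real. \<exists>R. \<forall>u\<in>Hk D z0 z1 k. R \<le> H1_norm u \<longrightarrow> ennreal B \<le> Mfun h \<beta> u))"
proof (intro allI impI)
  fix k :: int assume k: "k \<noteq> 0"
  have L: "L > 0" and hpos: "h > 0" and bpos: "\<beta> > 0" using assms by auto
  have l'Im: "Im z = - L" if "z \<in> l'" for z
  proof -
    from that obtain a where a: "z = (1 - a) *\<^sub>R Z t0 + a *\<^sub>R Z t1"
      using assms(13) unfolding closed_segment_def by auto
    show ?thesis unfolding a using assms(6,7) by (simp add: algebra_simps)
  qed
  have "bounded (regionD Z t0 t1)"
    by (rule D_bounded[OF assms(4), of Z Z']) (use sol in blast)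
  then obtain RD where RD: "\<And>z. z \<in> D \<Longrightarrow> norm z \<le> RD"
    using assms(12) unfolding bounded_iff by auto
  have P1: "\<exists>C>0. \<forall>z0\<in>l'. \<forall>z1\<in>l'. \<forall>u\<in>Hk D z0 z1 k. ennreal C \<le> Mfun h \<beta> u"
  proof (intro exI[of _ "1/2 * L^2 * h"] conjI ballI)
    show "0 < 1/2 * L^2 * h" using L hpos by simp
    fix z0 z1 u assume z0: "z0 \<in> l'" and z1: "z1 \<in> l'" and u: "u \<in> Hk D z0 z1 k"
    have Hu: "H1 u" using Hk_props[OF u] by simp
    have AL: "L^2 \<le> Aint u" by (rule Aint_ge_L[OF u k l'Im[OF z0]]) (use L in simp)
    have "ennreal (1/2 * L^2 * h) \<le> ennreal (1/2 * Aint u * h)"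
      using AL hpos by (intro ennreal_leI) (simp add: mult_right_mono)
    also have "\<dots> \<le> Mfun h \<beta> u" by (rule Mfun_ge[OF Hu]) (use hpos bpos in auto)
    finally show "ennreal (1/2 * L^2 * h) \<le> Mfun h \<beta> u" .
  qed
  have P2: "\<forall>z0\<in>l'. \<forall>z1\<in>l'.
        (\<forall>us u. (\<forall>n. us n \<in> Hk D z0 z1 k) \<longrightarrow> u \<in> Hk D z0 z1 k \<longrightarrow> weak_conv_H1 us u \<longrightarrow>
           Mfun h \<beta> u \<le> liminf (\<lambda>n. Mfun h \<beta> (us n))) \<and>
        (\<forall>B::real. \<exists>R. \<forall>u\<in>Hk D z0 z1 k. R \<le> H1_norm u \<longrightarrow> ennreal B \<le> Mfun h \<beta> u)"
  proof (intro ballI conjI)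
    fix z0 z1 assume z0: "z0 \<in> l'" and z1: "z1 \<in> l'"
    show "\<forall>us u. (\<forall>n. us n \<in> Hk D z0 z1 k) \<longrightarrow> u \<in> Hk D z0 z1 k \<longrightarrow> weak_conv_H1 us u \<longrightarrow>
             Mfun h \<beta> u \<le> liminf (\<lambda>n. Mfun h \<beta> (us n))"
    proof (intro allI impI)
      fix us u assume us: "\<forall>n. us n \<in> Hk D z0 z1 k" and u: "u \<in> Hk D z0 z1 k" and wc: "weak_conv_H1 us u"
      have Hu: "H1 u" using Hk_props[OF u] by simp
      have usn: "us n \<in> Hk D z0 z1 k" for n using us by blast
      have Hus: "H1 (us n)" for n using Hk_props(1)[OF usn] .
      have bnd1: "norm (us n s) \<le> RD" if "s \<in> {0..1}" for n s
        using RD Hk_props(2)[OF usn that] by blast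
      have bnd2: "norm (u s) \<le> RD" if "s \<in> {0..1}" for s
        using RD Hk_props(2)[OF u that] by blast
      have start: "us n 0 = u 0" for n using Hk_props(3)[OF usn] Hk_props(3)[OF u] by simp
      have pt: "(\<lambda>n. us n t) \<longlonglongrightarrow> u t" if "t \<in> {0..1}" for t
        by (rule weak_ptwise[OF wc bnd1 bnd2 start that])
      have A: "ennreal (Aint u) \<le> liminf (\<lambda>n. ennreal (Aint (us n)))"
        by (rule Aint_lsc[OF wc bnd1 bnd2 start])
      have B: "(\<integral>\<^sup>+ s \<in> {0..1}. Fz h \<beta> (u s) \<partial>lborel) \<le> liminf (\<lambda>n. \<integral>\<^sup>+ s \<in> {0..1}. Fz h \<beta> (us n s) \<partial>lborel)"
        by (rule B_lsc[OF H1_cont[OF Hus] pt]) (use hpos bpos in auto)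
      define a where "a n = ennreal (1/2) * ennreal (Aint (us n))" for n
      define b where "b n = (\<integral>\<^sup>+ s \<in> {0..1}. Fz h \<beta> (us n s) \<partial>lborel)" for n
      have "Mfun h \<beta> u = ennreal (1/2) * ennreal (Aint u) * (\<integral>\<^sup>+ s \<in> {0..1}. Fz h \<beta> (u s) \<partial>lborel)"
        by (rule Mfun_H1[OF Hu])
      also have "\<dots> \<le> ennreal (1/2) * liminf (\<lambda>n. ennreal (Aint (us n))) * liminf b"
        unfolding b_def by (intro mult_mono A B) auto
      also have "ennreal (1/2) * liminf (\<lambda>n. ennreal (Aint (us n))) = liminf (\<lambda>n. ennreal (1/2)) * liminf (\<lambda>n. ennreal (Aint (us n)))"
        by (simp add: Liminf_const)
      also have "\<dots> \<le> liminf a"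
        unfolding a_def by (rule liminf_mult_ennreal)
      also have "liminf a * liminf b \<le> liminf (\<lambda>n. a n * b n)"
        by (rule liminf_mult_ennreal)
      also have "(\<lambda>n. a n * b n) = (\<lambda>n. Mfun h \<beta> (us n))"
        unfolding a_def b_def using Mfun_H1[OF Hus] by simp
      finally show "Mfun h \<beta> u \<le> liminf (\<lambda>n. Mfun h \<beta> (us n))"
        by (simp add: mult_right_mono)
    qed
  next
    fix z0 z1 assume z0: "z0 \<in> l'" and z1: "z1 \<in> l'"
    show "\<forall>B::real. \<exists>R. \<forall>u\<in>Hk D z0 z1 k. R \<le> H1_norm u \<longrightarrow> ennreal B \<le> Mfun h \<beta> u"
    proof
    fix B :: real
    define Q where "Q = RD^2 + max 0 (2 * B / h)"
    show "\<exists>R. \<forall>u\<in>Hk D z0 z1 k. R \<le> H1_norm u \<longrightarrow> ennreal B \<le> Mfun h \<beta> u"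
    proof (intro exI[of _ "sqrt Q + 1"] ballI impI)
      fix u assume u: "u \<in> Hk D z0 z1 k" and R: "sqrt Q + 1 \<le> H1_norm u"
      have Hu: "H1 u" using Hk_props[OF u] by simp
      have bnd: "norm (u s) \<le> RD" if "s \<in> {0..1}" for s
        using RD Hk_props(2)[OF u that] by blast
      have AB: "2 * B / h \<le> Aint u"
      proof (rule ccontr)
        assume "\<not> 2 * B / h \<le> Aint u"
        then have "H1_inner u u \<le> Q" using H1_inner_self[OF Hu bnd] unfolding Q_def by linarith
        then have "H1_norm u \<le> sqrt Q" unfolding H1_norm_def by (rule real_sqrt_le_mono)
        then show False using R by linarith
      qed
      have "B \<le> 1/2 * Aint u * h"
        using AB hpos by (simp add: field_simps)
      then have "ennreal B \<le> ennreal (1/2 * Aint u * h)" by (rule ennreal_leI)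
      also have "\<dots> \<le> Mfun h \<beta> u" by (rule Mfun_ge[OF Hu]) (use hpos bpos in auto)
      finally show "ennreal B \<le> Mfun h \<beta> u" .
    qed
  qed
  qed
  show "(\<exists>C>0. \<forall>z0\<in>l'. \<forall>z1\<in>l'. \<forall>u\<in>Hk D z0 z1 k. ennreal C \<le> Mfun h \<beta> u) \<and>
     (\<forall>z0\<in>l'. \<forall>z1\<in>l'.
        (\<forall>us u. (\<forall>n. us n \<in> Hk D z0 z1 k) \<longrightarrow> u \<in> Hk D z0 z1 k \<longrightarrow> weak_conv_H1 us u \<longrightarrow>
           Mfun h \<beta> u \<le> liminf (\<lambda>n. Mfun h \<beta> (us n))) \<and>
        (\<forall>B::real. \<exists>R. \<forall>u\<in>Hk D z0 z1 k. R \<le> H1_norm u \<longrightarrow> ennreal B \<le> Mfun h \<beta> u))"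
    using P1 P2 by (rule conjI)
qed

end
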